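(* Let $\epsilon_1,\epsilon_2>0$ and let $F$ be an SCF on $n$ voters and three alternatives such that: (i) $M^{a,b}(F)\le\epsilon_1$ for every pair of distinct alternatives $a,b$; (ii) $F$ is at least $\epsilon_2$-far from every dictatorship and from every anti-dictatorship; (iii) $\Pr_{x\in(L_3)^n}[F(x)=a]\ge\epsilon_2$ for every alternative $a$. Then there exists a GSWF $G$ on $n$ voters and three alternatives such that: (1) $G$ satisfies IIA; (2) $\mathrm{Dist}(G,TR_3)\ge \epsilon_2-3\sqrt{\epsilon_1}$; (3) $NT(G)\le 3\sqrt{\epsilon_1}$.
   Context: $L_m$ is the set of linear orders on $m$ alternatives; profiles $x\in(L_m)^n$ are uniform random. For alternatives $a\ne b$, $x^{a,b}\in\{0,1\}^n$ has $x^{a,b}_i=1$ iff voter $i$ ranks $a$ above $b$. An SCF is $F:(L_m)^n\to\{$alternatives$\}$. $M^{a,b}(F)=\Pr[F(x)=a,\ F(x')=b]$ with $x,x'$ uniform profiles subject to $x^{a,b}=x'^{a,b}$. The $i$-th dictatorship (anti-dictatorship) SCF outputs the top (bottom) alternative of $x_i$; $F$ is $\delta$-far from it if $\Pr_x[F(x)\ne$ that output$]\ge\delta$. A GSWF is $G:(L_m)^n\to\{0,1\}^{\binom m2}$, giving for each pair $a,b$ a bit $G^{a,b}(x)$ ($=1$ iff society prefers $a$ to $b$, with $G^{b,a}=1-G^{a,b}$). $G$ satisfies IIA if each $G^{a,b}(x)$ depends only on $x^{a,b}$. $NT(G)=\Pr_x[G(x)$ is non-transitive$]$. $TR_m$ is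 the set of GSWFs on $m$ alternatives satisfying IIA whose output is always transitive, and $\mathrm{Dist}(G,TR_m)=\min_{H\in TR_m}\Pr_x[G(x)\ne H(x)]$. *)

theory Defs
  imports Complex_Main "HOL-Library.FuncSet"
begin

text \<open>A linear order (ranking) of a voter is a
relation r on 'a with linear_order r; the pair (a,b) in r means that a is ranked
(weakly) above b, so for a different from b, (a,b) in r iff a is ranked above b.\<close>

definition lin_orders :: "('a \<times> 'a) set set" where
  "lin_orders = {r. linear_order r}"

definition profiles :: "nat \<Rightarrow> (nat \<Rightarrow> ('a \<times> 'a) set) set" where
  "profiles n = {0..<n} \<rightarrow>\<^sub>E lin_orders"

definition Pr :: "nat \<Rightarrow> ((nat \<Rightarrow> ('a \<times> 'a) set) \<Rightarrow> bool) \<Rightarrow> real" where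
  "Pr n Q = real (card {x \<in> profiles n. Q x}) / real (card (profiles n :: (nat \<Rightarrow> ('a \<times> 'a) set) set))"

definition agree_on :: "nat \<Rightarrow> 'a \<Rightarrow> 'a \<Rightarrow> (nat \<Rightarrow> ('a \<times> 'a) set) \<Rightarrow> (nat \<Rightarrow> ('a \<times> 'a) set) \<Rightarrow> bool" where
  "agree_on n a b x x' \<longleftrightarrow> (\<forall>i<n. ((a,b) \<in> x i \<longleftrightarrow> (a,b) \<in> x' i))"

definition M :: "nat \<Rightarrow> 'a \<Rightarrow> 'a \<Rightarrow> ((nat \<Rightarrow> ('a \<times> 'a) set) \<Rightarrow> 'a) \<Rightarrow> real" where
  "M n a b F =
     real (card {(x, x'). x \<in> profiles n \<and> x' \<in> profiles n \<and> agree_on n a b x x'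
                         \<and> F x = a \<and> F x' = b})
     / real (card {(x, x'). x \<in> profiles n \<and> x' \<in> profiles n \<and> agree_on n a b x x'})"

definition top_alt :: "('a \<times> 'a) set \<Rightarrow> 'a" where
  "top_alt r = (THE c. \<forall>d. (c, d) \<in> r)"

definition bottom_alt :: "('a \<times> 'a) set \<Rightarrow> 'a" where
  "bottom_alt r = (THE c. \<forall>d. (d, c) \<in> r)"

definition far_from_dict :: "nat \<Rightarrow> real \<Rightarrow> ((nat \<Rightarrow> ('a \<times> 'a) set) \<Rightarrow> 'a) \<Rightarrow> nat \<Rightarrow> bool" where
  "far_from_dict n \<delta> F i \<longleftrightarrow> Pr n (\<lambda>x. F x \<noteq> top_alt (x i)) \<ge> \<delta>"

definition far_from_antidict :: "nat \<Rightarrow> real \<Rightarrow> ((nat \<Rightarrow> ('a \<times> 'a) set) \<Rightarrow> 'a) \<Rightarrow> nat \<Rightarrow> bool" where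
  "far_from_antidict n \<delta> F i \<longleftrightarrow> Pr n (\<lambda>x. F x \<noteq> bottom_alt (x i)) \<ge> \<delta>"

text \<open>A GSWF: G x a b is the bit G^{a,b}(x) (society prefers a to b), for a \<noteq> b,
with G^{b,a} = 1 - G^{a,b}; the diagonal is normalised to False so that the output
G x is exactly determined by the bits on pairs of distinct alternatives.\<close>
definition is_gswf :: "nat \<Rightarrow> ((nat \<Rightarrow> ('a \<times> 'a) set) \<Rightarrow> 'a \<Rightarrow> 'a \<Rightarrow> bool) \<Rightarrow> bool" where
  "is_gswf n G \<longleftrightarrow> (\<forall>x \<in> profiles n. (\<forall>a. \<not> G x a a) \<and>
        (\<forall>a b. a \<noteq> b \<longrightarrow> (G x b a \<longleftrightarrow> \<not> G x a b)))"

definition IIA :: "nat \<Rightarrow> ((nat \<Rightarrow> ('a \<times> 'a) set) \<Rightarrow> 'a \<Rightarrow> 'a \<Rightarrow> bool) \<Rightarrow> bool" where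
  "IIA n G \<longleftrightarrow> (\<forall>a b. \<forall>x \<in> profiles n. \<forall>x' \<in> profiles n.
        agree_on n a b x x' \<longrightarrow> (G x a b \<longleftrightarrow> G x' a b))"

definition transitive_out :: "('a \<Rightarrow> 'a \<Rightarrow> bool) \<Rightarrow> bool" where
  "transitive_out g \<longleftrightarrow> (\<forall>a b c. g a b \<and> g b c \<longrightarrow> g a c)"

definition NT :: "nat \<Rightarrow> ((nat \<Rightarrow> ('a \<times> 'a) set) \<Rightarrow> 'a \<Rightarrow> 'a \<Rightarrow> bool) \<Rightarrow> real" where
  "NT n G = Pr n (\<lambda>x. \<not> transitive_out (G x))"

definition TR :: "nat \<Rightarrow> ((nat \<Rightarrow> ('a \<times> 'a) set) \<Rightarrow> 'a \<Rightarrow> 'a \<Rightarrow> bool) set" where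
  "TR n = {H. is_gswf n H \<and> IIA n H \<and> (\<forall>x \<in> profiles n. transitive_out (H x))}"

definition Dist :: "nat \<Rightarrow> ((nat \<Rightarrow> ('a \<times> 'a) set) \<Rightarrow> 'a \<Rightarrow> 'a \<Rightarrow> bool) \<Rightarrow> real" where
  "Dist n G = Inf ((\<lambda>H. Pr n (\<lambda>x. G x \<noteq> H x)) ` TR n)"

end

theory Submission
  imports Defs
begin



lemma lin_swap:
  assumes "linear_order r" "p \<noteq> q"
  shows "(q,p) \<in> r \<longleftrightarrow> (p,q) \<notin> r"
  using assms unfolding linear_order_on_def partial_order_on_def total_on_def antisym_def
  by blast

lemma lin_refl: "linear_order r \<Longrightarrow> (p,p) \<in> r"
  unfolding linear_order_on_def partial_order_on_def preorder_on_def refl_on_def by blast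

lemma lin_trans: "linear_order r \<Longrightarrow> (p,q) \<in> r \<Longrightarrow> (q,s) \<in> r \<Longrightarrow> (p,s) \<in> r"
  unfolding linear_order_on_def partial_order_on_def preorder_on_def trans_def by blast

lemma lin_antisym: "linear_order r \<Longrightarrow> (p,q) \<in> r \<Longrightarrow> (q,p) \<in> r \<Longrightarrow> p = q"
  unfolding linear_order_on_def partial_order_on_def antisym_def by blast

lemma profiles_iff: "x \<in> profiles n \<longleftrightarrow> (\<forall>i<n. linear_order (x i)) \<and> (\<forall>i. i \<ge> n \<longrightarrow> x i = undefined)"
  unfolding profiles_def PiE_iff lin_orders_def extensional_def by auto

lemma finite_profiles: "finite (profiles n :: (nat \<Rightarrow> ('a::finite \<times> 'a) set) set)"
  unfolding profiles_def by (rule finite_PiE) auto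

lemma Pr_mono:
  fixes Q R :: "(nat \<Rightarrow> ('a::finite \<times> 'a) set) \<Rightarrow> bool"
  assumes "\<And>x. x \<in> profiles n \<Longrightarrow> Q x \<Longrightarrow> R x"
  shows "Pr n Q \<le> (Pr n R :: real)"
proof -
  have "card {x \<in> profiles n. Q x} \<le> card {x \<in> profiles n. R x}"
    by (rule card_mono) (use assms finite_profiles[of n] in auto)
  then show ?thesis unfolding Pr_def by (simp add: divide_right_mono)
qed

lemma Pr_union:
  fixes Q R :: "(nat \<Rightarrow> ('a::finite \<times> 'a) set) \<Rightarrow> bool"
  shows "Pr n (\<lambda>x. Q x \<or> R x) \<le> Pr n Q + (Pr n R :: real)"
proof -
  have "{x \<in> profiles n. Q x \<or> R x} = {x \<in> profiles n. Q x} \<union> {x \<in> profiles n. R x}" by auto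
  then have "card {x \<in> profiles n. Q x \<or> R x} \<le> card {x \<in> profiles n. Q x} + card {x \<in> profiles n. R x}"
    by (simp add: card_Un_le)
  then have "real (card {x \<in> profiles n. Q x \<or> R x}) \<le> real (card {x \<in> profiles n. Q x}) + real (card {x \<in> profiles n. R x})"
    by linarith
  then show ?thesis unfolding Pr_def by (simp add: divide_right_mono add_divide_distrib[symmetric])
qed

lemma Pr_nonneg: "Pr n Q \<ge> 0" unfolding Pr_def by simp

lemma Pr_le1:
  fixes Q :: "(nat \<Rightarrow> ('a::finite \<times> 'a) set) \<Rightarrow> bool"
  shows "Pr n Q \<le> 1"
proof -
  have "card {x \<in> profiles n. Q x} \<le> card (profiles n :: (nat \<Rightarrow> ('a \<times> 'a) set) set)"
    by (rule card_mono[OF finite_profiles]) auto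
  then show ?thesis unfolding Pr_def
    by (cases "card (profiles n :: (nat \<Rightarrow> ('a \<times> 'a) set) set) = 0") (auto simp: divide_le_eq_1)
qed

lemma lin_of_inj: assumes "inj (f :: 'a \<Rightarrow> nat)" shows "linear_order {(u,v). f u \<le> f v}"
  using assms unfolding linear_order_on_def partial_order_on_def preorder_on_def refl_on_def trans_def antisym_def total_on_def inj_def
  by auto

locale three =
  fixes a b c :: "'a::finite"
  assumes ab: "a \<noteq> b" and bc: "b \<noteq> c" and ac: "a \<noteq> c"
    and univ: "\<And>x. x = a \<or> x = b \<or> x = c"
begin

definition rnk :: "bool \<Rightarrow> bool \<Rightarrow> bool \<Rightarrow> 'a \<Rightarrow> nat" where
  "rnk p q r u = (if u = a then (if p then 0 else 1) + (if r then 1 else 0)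
     else if u = b then (if q then 0 else 1) + (if p then 1 else 0)
     else (if r then 0 else 1) + (if q then 1 else 0))"
definition ord3 :: "bool \<Rightarrow> bool \<Rightarrow> bool \<Rightarrow> ('a \<times> 'a) set" where
  "ord3 p q r = {(u,v). rnk p q r u \<le> rnk p q r v}"

lemma rnk_inj: assumes nae: "\<not> (p = q \<and> q = r)" shows "inj (rnk p q r)"
proof (rule injI)
  fix u v assume e: "rnk p q r u = rnk p q r v"
  show "u = v"
    using univ[of u] univ[of v] e nae ab bc ac
    by (cases p; cases q; cases r) (auto simp: rnk_def)
qed

lemma ord3_lin: assumes nae: "\<not> (p = q \<and> q = r)" shows "linear_order (ord3 p q r)"
  unfolding ord3_def by (rule lin_of_inj[OF rnk_inj[OF nae]])

lemma ord3_bits: assumes nae: "\<not> (p = q \<and> q = r)"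
  shows "(a,b) \<in> ord3 p q r \<longleftrightarrow> p" "(b,c) \<in> ord3 p q r \<longleftrightarrow> q" "(c,a) \<in> ord3 p q r \<longleftrightarrow> r"
  using nae ab bc ac by (cases p; cases q; cases r; simp add: ord3_def rnk_def)+

lemma lin_nae: assumes r: "linear_order r"
  shows "\<not> (((a,b) \<in> r \<longleftrightarrow> (b,c) \<in> r) \<and> ((b,c) \<in> r \<longleftrightarrow> (c,a) \<in> r))"
proof
  assume h: "((a,b) \<in> r \<longleftrightarrow> (b,c) \<in> r) \<and> ((b,c) \<in> r \<longleftrightarrow> (c,a) \<in> r)"
  show False
  proof (cases "(a,b) \<in> r")
    case True
    then have 1: "(b,c) \<in> r" and 2: "(c,a) \<in> r" using h by auto
    have "(a,c) \<in> r" by (rule lin_trans[OF r True 1])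
    then have "a = c" by (rule lin_antisym[OF r _ 2])
    then show False using ac by simp
  next
    case False
    then have 1: "(b,c) \<notin> r" and 2: "(c,a) \<notin> r" using h by auto
    have 3: "(b,a) \<in> r" using lin_swap[OF r ab] False by simp
    have 4: "(c,b) \<in> r" using lin_swap[OF r bc] 1 by simp
    have "(c,a) \<in> r" by (rule lin_trans[OF r 4 3])
    then show False using 2 by simp
  qed
qed

lemma lin_max: fixes r :: "('a \<times> 'a) set" assumes r: "linear_order r" shows "\<exists>t. \<forall>d. (t,d) \<in> r"
proof -
  have sw: "(q,p) \<in> r" if "p \<noteq> q" "(p,q) \<notin> r" for p q using lin_swap[OF r that(1)] that(2) by simp
  have rf: "(p,p) \<in> r" for p using lin_refl[OF r] .
  have all: "\<exists>t. \<forall>d. (t,d) \<in> r" if h: "(t,a) \<in> r" "(t,b) \<in> r" "(t,c) \<in> r" for t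
  proof -
    have "\<forall>d. (t,d) \<in> r"
    proof
      fix d show "(t,d) \<in> r" using univ[of d] h by auto
    qed
    then show ?thesis by blast
  qed
  show ?thesis
  proof (cases "(a,b) \<in> r")
    case ab': True
    show ?thesis
    proof (cases "(a,c) \<in> r")
      case True then show ?thesis using all[of a] ab' rf by blast
    next
      case False then have ca: "(c,a) \<in> r" using sw[OF ac] by blast
      have "(c,b) \<in> r" by (rule lin_trans[OF r ca ab'])
      then show ?thesis using all[of c] ca rf by blast
    qed
  next
    case ba: False
    then have ba: "(b,a) \<in> r" using sw[OF ab] by blast
    show ?thesis
    proof (cases "(b,c) \<in> r")
      case True then show ?thesis using all[of b] ba rf by blast
    next
      case False then have cb: "(c,b) \<in> r" using sw[OF bc] by blast
      have "(c,a) \<in> r" by (rule lin_trans[OF r cb ba])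
      then show ?thesis using all[of c] cb rf by blast
    qed
  qed
qed

lemma converse_lin: "linear_order r \<Longrightarrow> linear_order (r\<inverse>)"
  by simp

lemma exists_lin: "\<exists>r::('a\<times>'a) set. linear_order r"
  using ord3_lin[of True True False] by blast

lemma profiles_ne: "profiles n \<noteq> ({} :: (nat \<Rightarrow> ('a \<times> 'a) set) set)"
proof -
  obtain r :: "('a\<times>'a) set" where "linear_order r" using exists_lin by blast
  then have "(\<lambda>i. if i < n then r else undefined) \<in> profiles n" unfolding profiles_iff by auto
  then show ?thesis by blast
qed

lemma card_profiles_pos: "card (profiles n :: (nat \<Rightarrow> ('a \<times> 'a) set) set) > 0"
  by (simp add: card_gt_0_iff finite_profiles profiles_ne)

lemma top_alt: fixes r :: "('a \<times> 'a) set" assumes "linear_order r" shows "\<forall>d. (top_alt r, d) \<in> r"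
proof -
  have ex: "\<exists>t. \<forall>d. (t,d) \<in> r" by (rule lin_max[OF assms])
  from ex obtain t where t: "\<forall>d. (t,d) \<in> r" by blast
  have "\<exists>!t. \<forall>d. (t,d) \<in> r"
  proof (rule ex1I[of _ t])
    show "\<forall>d. (t,d) \<in> r" by (rule t)
    fix s assume "\<forall>d. (s,d) \<in> r"
    then show "s = t" using lin_antisym[OF assms, of s t] t by blast
  qed
  then show ?thesis unfolding top_alt_def by (rule theI')
qed

lemma bottom_alt: fixes r :: "('a \<times> 'a) set" assumes "linear_order r" shows "\<forall>d. (d, bottom_alt r) \<in> r"
proof -
  have ex: "\<exists>t. \<forall>d. (d,t) \<in> r" using lin_max[OF converse_lin[OF assms]] by auto
  from ex obtain t where t: "\<forall>d. (d,t) \<in> r" by blast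
  have "\<exists>!t. \<forall>d. (d,t) \<in> r"
  proof (rule ex1I[of _ t])
    show "\<forall>d. (d,t) \<in> r" by (rule t)
    fix s assume "\<forall>d. (d,s) \<in> r"
    then show "s = t" using lin_antisym[OF assms, of s t] t by blast
  qed
  then show ?thesis unfolding bottom_alt_def by (rule theI')
qed

end



definition tp :: "'a \<Rightarrow> 'a \<Rightarrow> 'a \<Rightarrow> 'a" where
  "tp p q u = (if u = p then q else if u = q then p else u)"

definition sw :: "'a \<Rightarrow> 'a \<Rightarrow> ('a \<times> 'a) set \<Rightarrow> ('a \<times> 'a) set" where
  "sw p q r = {(u,v). (tp p q u, tp p q v) \<in> r}"

lemma tp_tp[simp]: "tp p q (tp p q u) = u" unfolding tp_def by auto
lemma tp_inj: "tp p q u = tp p q v \<longleftrightarrow> u = v" by (metis tp_tp)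

lemma sw_sw[simp]: "sw p q (sw p q r) = r" unfolding sw_def by auto

lemma sw_lin: fixes r :: "('a \<times> 'a) set" assumes r: "linear_order r" shows "linear_order (sw p q r)"
proof -
  have R: "refl_on UNIV (sw p q r)" unfolding refl_on_def sw_def using lin_refl[OF r] by auto
  have T: "trans (sw p q r)"
  proof (rule transI)
    fix u v w :: 'a assume "(u,v) \<in> sw p q r" "(v,w) \<in> sw p q r"
    then show "(u,w) \<in> sw p q r" unfolding sw_def
      using lin_trans[OF r, of "tp p q u" "tp p q v" "tp p q w"] by simp
  qed
  have A: "antisym (sw p q r)"
  proof (rule antisymI)
    fix u v :: 'a assume "(u,v) \<in> sw p q r" "(v,u) \<in> sw p q r"
    then have "tp p q u = tp p q v" unfolding sw_def using lin_antisym[OF r, of "tp p q u" "tp p q v"] by simp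
    then show "u = v" by (simp add: tp_inj)
  qed
  have To: "total_on UNIV (sw p q r)"
  proof (rule total_onI)
    fix u v :: 'a assume "u \<in> UNIV" "v \<in> UNIV" "u \<noteq> v"
    then have "tp p q u \<noteq> tp p q v" by (simp add: tp_inj)
    then show "(u,v) \<in> sw p q r \<or> (v,u) \<in> sw p q r" unfolding sw_def
      using lin_swap[OF r, of "tp p q u" "tp p q v"] by auto
  qed
  show ?thesis unfolding linear_order_on_def partial_order_on_def preorder_on_def using R T A To by auto
qed

lemma sw_pq: "p \<noteq> q \<Longrightarrow> (p,q) \<in> sw p q r \<longleftrightarrow> (q,p) \<in> r" unfolding sw_def tp_def by auto

definition cls :: "nat \<Rightarrow> 'a \<Rightarrow> 'a \<Rightarrow> (nat \<Rightarrow> ('a \<times> 'a) set) \<Rightarrow> (nat \<Rightarrow> ('a \<times> 'a) set) set" where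
  "cls n p q x = {y \<in> profiles n. agree_on n p q x y}"

lemma cls_card_le:
  assumes x: "x \<in> profiles n" and x': "x' \<in> profiles n" and pq: "p \<noteq> q"
  shows "card (cls n p q (x :: nat \<Rightarrow> ('a::finite \<times> 'a) set)) \<le> card (cls n p q x')"
proof -
  define D where "D = {i. i < n \<and> ((p,q) \<in> x i \<longleftrightarrow> (p,q) \<notin> x' i)}"
  define \<psi> where "\<psi> = (\<lambda>y::nat \<Rightarrow> ('a \<times> 'a) set. \<lambda>i. if i \<in> D then sw p q (y i) else y i)"
  have inj: "inj_on \<psi> (cls n p q x)"
  proof (rule inj_onI)
    fix y z assume "\<psi> y = \<psi> z"
    then have "\<And>i. \<psi> y i = \<psi> z i" by simp
    then have "\<And>i. y i = z i" unfolding \<psi>_def by (metis sw_sw)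
    then show "y = z" by auto
  qed
  have img: "\<psi> ` cls n p q x \<subseteq> cls n p q x'"
  proof
    fix w assume "w \<in> \<psi> ` cls n p q x"
    then obtain y where y: "y \<in> cls n p q x" and w: "w = \<psi> y" by auto
    have yP: "y \<in> profiles n" and ag: "agree_on n p q x y" using y unfolding cls_def by auto
    have "w \<in> profiles n" using yP unfolding w \<psi>_def profiles_iff D_def by (auto intro: sw_lin)
    moreover have "agree_on n p q x' w"
      unfolding agree_on_def
    proof (intro allI impI)
      fix i assume i: "i < n"
      have ly: "linear_order (y i)" using yP i profiles_iff by blast
      show "(p,q) \<in> x' i \<longleftrightarrow> (p,q) \<in> w i"
      proof (cases "i \<in> D")
        case True
        then have "w i = sw p q (y i)" unfolding w \<psi>_def by simp
        then have "(p,q) \<in> w i \<longleftrightarrow> (p,q) \<notin> y i" using lin_swap[OF ly pq] sw_pq[OF pq] by simp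
        moreover have "(p,q) \<in> x i \<longleftrightarrow> (p,q) \<in> y i" using ag i unfolding agree_on_def by blast
        moreover have "(p,q) \<in> x i \<longleftrightarrow> (p,q) \<notin> x' i" using True unfolding D_def by blast
        ultimately show ?thesis by blast
      next
        case False
        then show ?thesis using ag i unfolding w \<psi>_def D_def agree_on_def by auto
      qed
    qed
    ultimately show "w \<in> cls n p q x'" unfolding cls_def by auto
  qed
  have fin: "finite (cls n p q x')" unfolding cls_def
    by (rule finite_subset[of _ "profiles n"]) (auto simp: finite_profiles)
  show ?thesis using card_inj_on_le[OF inj img fin] .
qed

lemma cls_card_eq:
  assumes "x \<in> profiles n" "x' \<in> profiles n" "p \<noteq> q"
  shows "card (cls n p q (x :: nat \<Rightarrow> ('a::finite \<times> 'a) set)) = card (cls n p q x')"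
  using cls_card_le[OF assms] cls_card_le[OF assms(2,1,3)] by simp

lemma agree_refl: "agree_on n p q x x" unfolding agree_on_def by auto
lemma agree_sym: "agree_on n p q x y \<Longrightarrow> agree_on n p q y x" unfolding agree_on_def by auto
lemma agree_trans: "agree_on n p q x y \<Longrightarrow> agree_on n p q y z \<Longrightarrow> agree_on n p q x z"
  unfolding agree_on_def by auto
lemma agree_flip:
  assumes x: "x \<in> profiles n" and y: "y \<in> profiles n" and pq: "p \<noteq> q"
  shows "agree_on n q p x y \<longleftrightarrow> agree_on n p q x y"
proof -
  have "((q,p) \<in> x i \<longleftrightarrow> (q,p) \<in> y i) \<longleftrightarrow> ((p,q) \<in> x i \<longleftrightarrow> (p,q) \<in> y i)" if "i < n" for i
  proof -
    have lx: "linear_order (x i)" and ly: "linear_order (y i)" using x y that profiles_iff by blast+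
    show ?thesis using lin_swap[OF lx pq] lin_swap[OF ly pq] by simp
  qed
  then show ?thesis unfolding agree_on_def by simp
qed




lemma CS_sum:
  fixes f :: "'b \<Rightarrow> real"
  assumes "finite I"
  shows "(\<Sum>i\<in>I. f i)\<^sup>2 \<le> real (card I) * (\<Sum>i\<in>I. (f i)\<^sup>2)"
proof (cases "I = {}")
  case True then show ?thesis by simp
next
  case False
  define m where "m = (\<Sum>i\<in>I. f i) / real (card I)"
  have cpos: "real (card I) > 0" using assms False by (simp add: card_gt_0_iff)
  have "0 \<le> (\<Sum>i\<in>I. (f i - m)\<^sup>2)" by (simp add: sum_nonneg)
  also have "\<dots> = (\<Sum>i\<in>I. (f i)\<^sup>2) - 2 * m * (\<Sum>i\<in>I. f i) + real (card I) * m\<^sup>2"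
    by (simp add: power2_eq_square algebra_simps sum.distrib sum_subtractf sum_distrib_left sum_distrib_right)
  also have "\<dots> = (\<Sum>i\<in>I. (f i)\<^sup>2) - (\<Sum>i\<in>I. f i)\<^sup>2 / real (card I)"
    using cpos by (simp add: m_def power2_eq_square field_simps)
  finally have "(\<Sum>i\<in>I. f i)\<^sup>2 / real (card I) \<le> (\<Sum>i\<in>I. (f i)\<^sup>2)" by simp
  then show ?thesis using cpos by (simp add: field_simps)
qed

locale scf = three a b c for a b c :: "'a::finite" +
  fixes n :: nat and F :: "(nat \<Rightarrow> ('a \<times> 'a) set) \<Rightarrow> 'a"
begin

definition rk :: "'a \<Rightarrow> nat" where
  "rk u = (if u = a then 0 else if u = b then 1 else 2)"

lemma rk_inj: "p \<noteq> q \<Longrightarrow> rk p \<noteq> rk q"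
  using univ[of p] univ[of q] ab bc ac unfolding rk_def by auto

definition Cnt :: "'a \<Rightarrow> 'a \<Rightarrow> (nat \<Rightarrow> ('a \<times> 'a) set) \<Rightarrow> 'a \<Rightarrow> nat" where
  "Cnt p q x r = card {y \<in> profiles n. agree_on n p q x y \<and> F y = r}"

definition G :: "(nat \<Rightarrow> ('a \<times> 'a) set) \<Rightarrow> 'a \<Rightarrow> 'a \<Rightarrow> bool" where
  "G x p q = (p \<noteq> q \<and> (Cnt p q x q < Cnt p q x p \<or> (Cnt p q x p = Cnt p q x q \<and> rk p < rk q)))"

lemma Cnt_flip: "x \<in> profiles n \<Longrightarrow> p \<noteq> q \<Longrightarrow> Cnt q p x r = Cnt p q x r"
  unfolding Cnt_def using agree_flip by (metis (no_types, lifting))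

lemma Cnt_inv: "agree_on n p q x x' \<Longrightarrow> Cnt p q x r = Cnt p q x' r"
proof -
  assume h: "agree_on n p q x x'"
  have "{y \<in> profiles n. agree_on n p q x y \<and> F y = r} = {y \<in> profiles n. agree_on n p q x' y \<and> F y = r}"
    using h unfolding agree_on_def by auto
  then show ?thesis unfolding Cnt_def by simp
qed

lemma G_anti: assumes "x \<in> profiles n" "p \<noteq> q" shows "G x q p \<longleftrightarrow> \<not> G x p q"
proof -
  have "Cnt q p x r = Cnt p q x r" for r using Cnt_flip[OF assms] .
  moreover have "rk p \<noteq> rk q" using rk_inj assms(2) by blast
  ultimately show ?thesis unfolding G_def using assms(2) by auto
qed

lemma G_inv: "agree_on n p q x x' \<Longrightarrow> G x p q = G x' p q"
  unfolding G_def using Cnt_inv by metis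

lemma G_gswf: "is_gswf n G"
  unfolding is_gswf_def using G_anti by (auto simp: G_def)

lemma G_IIA: "IIA n G"
  unfolding IIA_def using G_inv by blast

lemma G_le1: "G x p q \<Longrightarrow> Cnt p q x q \<le> Cnt p q x p" unfolding G_def by auto
lemma G_le2: "\<not> G x p q \<Longrightarrow> p \<noteq> q \<Longrightarrow> Cnt p q x p \<le> Cnt p q x q" unfolding G_def by auto

lemma fin_P: "finite (profiles n :: (nat \<Rightarrow> ('a \<times> 'a) set) set)" by (rule finite_profiles)

lemma double_count:
  fixes h :: "(nat \<Rightarrow> ('a \<times> 'a) set) \<Rightarrow> real"
  assumes s: "\<And>x. x \<in> profiles n \<Longrightarrow> card (cls n p q x) = s"
  shows "(\<Sum>x\<in>profiles n. \<Sum>y\<in>cls n p q x. h y) = real s * (\<Sum>y\<in>profiles n. h y)"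
proof -
  have "(\<Sum>x\<in>profiles n. \<Sum>y\<in>cls n p q x. h y)
      = (\<Sum>x\<in>profiles n. \<Sum>y\<in>profiles n. if agree_on n p q x y then h y else 0)"
    unfolding cls_def by (simp add: sum.inter_filter[OF fin_P])
  also have "\<dots> = (\<Sum>y\<in>profiles n. \<Sum>x\<in>profiles n. if agree_on n p q x y then h y else 0)"
    by (rule sum.swap)
  also have "\<dots> = (\<Sum>y\<in>profiles n. h y * real (card (cls n p q y)))"
  proof (rule sum.cong[OF refl])
    fix y :: "nat \<Rightarrow> ('a \<times> 'a) set" assume y: "y \<in> profiles n"
    have "(\<Sum>x\<in>profiles n. if agree_on n p q x y then h y else 0) = (\<Sum>x\<in>{x \<in> profiles n. agree_on n p q x y}. h y)"
      by (rule sum.inter_filter[OF fin_P, symmetric])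
    also have "\<dots> = h y * real (card {x \<in> profiles n. agree_on n p q x y})" by simp
    also have "{x \<in> profiles n. agree_on n p q x y} = cls n p q y" unfolding cls_def agree_on_def by auto
    finally show "(\<Sum>x\<in>profiles n. if agree_on n p q x y then h y else 0) = h y * real (card (cls n p q y))" .
  qed
  also have "\<dots> = (\<Sum>y\<in>profiles n. h y * real s)" using s by simp
  finally show ?thesis by (simp add: sum_distrib_left mult.commute)
qed

end



context scf begin

lemma Cnt_cls: "Cnt p q x r = card {y \<in> cls n p q x. F y = r}"
  unfolding Cnt_def cls_def by (rule arg_cong[where f=card]) auto

lemma fin_cls: "finite (cls n p q (x :: nat \<Rightarrow> ('a \<times> 'a) set))"
  unfolding cls_def by (rule finite_subset[of _ "profiles n"]) (auto simp: fin_P)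

lemma sum_cls_const: "(\<Sum>y\<in>cls n p q x. if F y = r then (k::real) else 0) = k * real (Cnt p q x r)"
proof -
  have "(\<Sum>y\<in>cls n p q x. if F y = r then k else 0) = (\<Sum>y\<in>{y \<in> cls n p q x. F y = r}. k)"
    by (rule sum.inter_filter[OF fin_cls, symmetric])
  also have "\<dots> = k * real (Cnt p q x r)" by (simp add: Cnt_cls)
  finally show ?thesis .
qed

lemma est:
  assumes pq: "p \<noteq> q"
  shows "Pr n (\<lambda>x. F x = p \<and> \<not> G x p q) + Pr n (\<lambda>x. F x = q \<and> \<not> G x q p) \<le> sqrt (M n p q F)"
proof -
  define P where "P = (profiles n :: (nat \<Rightarrow> ('a \<times> 'a) set) set)"
  obtain x0 where x0: "x0 \<in> P" using profiles_ne unfolding P_def by blast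
  define s where "s = card (cls n p q x0)"
  have hs: "\<And>x. x \<in> profiles n \<Longrightarrow> card (cls n p q x) = s"
    unfolding s_def using cls_card_eq x0 pq unfolding P_def by metis
  have "x0 \<in> cls n p q x0" using x0 unfolding cls_def P_def by (auto simp: agree_refl)
  then have spos: "s > 0" unfolding s_def using fin_cls card_gt_0_iff by blast
  define N where "N = card P"
  have Npos: "N > 0" unfolding N_def P_def by (rule card_profiles_pos)
  have finP: "finite P" unfolding P_def by (rule fin_P)
  define A where "A x = real (Cnt p q x p)" for x
  define B where "B x = real (Cnt p q x q)" for x
  define m where "m x = (if G x p q then B x else A x)" for x
  define E1 where "E1 = real (card {x \<in> P. F x = p \<and> \<not> G x p q})"
  define E2 where "E2 = real (card {x \<in> P. F x = q \<and> \<not> G x q p})"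
  define Num where "Num = real (card {(x, x'). x \<in> P \<and> x' \<in> P \<and> agree_on n p q x x' \<and> F x = p \<and> F x' = q})"
  define Den where "Den = real (card {(x, x'). x \<in> P \<and> x' \<in> P \<and> agree_on n p q x x'})"
  have agG: "G y p q = G x p q" if "y \<in> cls n p q x" for x y
    using that G_inv unfolding cls_def by (metis (mono_tags, lifting) mem_Collect_eq)
  have agB: "B y = B x" if "y \<in> cls n p q x" for x y
    using that Cnt_inv unfolding cls_def B_def by (metis (mono_tags, lifting) mem_Collect_eq)
  have "E1 = (\<Sum>y\<in>P. if F y = p \<and> \<not> G y p q then 1 else 0)"
    unfolding E1_def sum.inter_filter[OF finP, symmetric] by simp
  then have "real s * E1 = (\<Sum>x\<in>P. \<Sum>y\<in>cls n p q x. if F y = p \<and> \<not> G y p q then 1 else 0)"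
    using double_count[OF hs, of "\<lambda>y. if F y = p \<and> \<not> G y p q then 1 else 0"] unfolding P_def by simp
  also have "\<dots> = (\<Sum>x\<in>P. if G x p q then 0 else A x)"
  proof (rule sum.cong[OF refl])
    fix x assume x: "x \<in> P"
    have "(\<Sum>y\<in>cls n p q x. if F y = p \<and> \<not> G y p q then 1 else 0)
        = (\<Sum>y\<in>cls n p q x. if F y = p then (if G x p q then 0 else 1) else (0::real))"
      by (rule sum.cong[OF refl]) (simp add: agG)
    also have "\<dots> = (if G x p q then 0 else 1) * A x" unfolding A_def by (rule sum_cls_const)
    finally show "(\<Sum>y\<in>cls n p q x. if F y = p \<and> \<not> G y p q then 1 else 0) = (if G x p q then 0 else A x)"
      by simp
  qed
  finally have e1: "real s * E1 = (\<Sum>x\<in>P. if G x p q then 0 else A x)" .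
  have "E2 = (\<Sum>y\<in>P. if F y = q \<and> \<not> G y q p then 1 else 0)"
    unfolding E2_def sum.inter_filter[OF finP, symmetric] by simp
  then have "real s * E2 = (\<Sum>x\<in>P. \<Sum>y\<in>cls n p q x. if F y = q \<and> \<not> G y q p then 1 else 0)"
    using double_count[OF hs, of "\<lambda>y. if F y = q \<and> \<not> G y q p then 1 else 0"] unfolding P_def by simp
  also have "\<dots> = (\<Sum>x\<in>P. if G x p q then B x else 0)"
  proof (rule sum.cong[OF refl])
    fix x assume x: "x \<in> P"
    have "(\<Sum>y\<in>cls n p q x. if F y = q \<and> \<not> G y q p then 1 else 0)
        = (\<Sum>y\<in>cls n p q x. if F y = q then (if G x p q then 1 else 0) else (0::real))"
    proof (rule sum.cong[OF refl])
      fix y assume y: "y \<in> cls n p q x"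
      then have "y \<in> profiles n" unfolding cls_def by blast
      then have "G y q p = (\<not> G x p q)" using G_anti[OF _ pq] agG[OF y] by simp
      then show "(if F y = q \<and> \<not> G y q p then 1 else 0) = (if F y = q then (if G x p q then 1 else 0) else (0::real))"
        by simp
    qed
    also have "\<dots> = (if G x p q then 1 else 0) * B x" unfolding B_def by (rule sum_cls_const)
    finally show "(\<Sum>y\<in>cls n p q x. if F y = q \<and> \<not> G y q p then 1 else 0) = (if G x p q then B x else 0)"
      by simp
  qed
  finally have e2: "real s * E2 = (\<Sum>x\<in>P. if G x p q then B x else 0)" .
  have sE: "real s * (E1 + E2) = (\<Sum>x\<in>P. m x)"
    unfolding distrib_left e1 e2 m_def by (auto simp: sum.distrib[symmetric] intro!: sum.cong)
  have "{(x, x'). x \<in> P \<and> x' \<in> P \<and> agree_on n p q x x' \<and> F x = p \<and> F x' = q}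
      = Sigma {x \<in> P. F x = p} (\<lambda>x. {y \<in> profiles n. agree_on n p q x y \<and> F y = q})"
    unfolding P_def by auto
  then have "Num = (\<Sum>x\<in>{x \<in> P. F x = p}. real (Cnt p q x q))"
    unfolding Num_def Cnt_def using finP by (simp add: fin_P)
  also have "\<dots> = (\<Sum>x\<in>P. if F x = p then B x else 0)"
    unfolding B_def by (rule sum.inter_filter[OF finP])
  finally have "real s * Num = real s * (\<Sum>x\<in>P. if F x = p then B x else 0)" by simp
  also have "\<dots> = (\<Sum>x\<in>P. \<Sum>y\<in>cls n p q x. if F y = p then B y else 0)"
    using double_count[OF hs, of "\<lambda>y. if F y = p then B y else 0"] unfolding P_def by simp
  also have "\<dots> = (\<Sum>x\<in>P. B x * A x)"
  proof (rule sum.cong[OF refl])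
    fix x assume x: "x \<in> P"
    have "(\<Sum>y\<in>cls n p q x. if F y = p then B y else 0) = (\<Sum>y\<in>cls n p q x. if F y = p then B x else 0)"
      by (rule sum.cong[OF refl]) (simp add: agB)
    also have "\<dots> = B x * A x" unfolding A_def by (rule sum_cls_const)
    finally show "(\<Sum>y\<in>cls n p q x. if F y = p then B y else 0) = B x * A x" .
  qed
  finally have sNum: "real s * Num = (\<Sum>x\<in>P. A x * B x)" by (simp add: mult.commute)
  have "{(x, x'). x \<in> P \<and> x' \<in> P \<and> agree_on n p q x x'} = Sigma P (\<lambda>x. cls n p q x)"
    unfolding P_def cls_def by auto
  then have "Den = (\<Sum>x\<in>P. real (card (cls n p q x)))"
    unfolding Den_def using finP fin_cls by simp
  also have "\<dots> = real N * real s" unfolding N_def using hs unfolding P_def by simp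
  finally have den: "Den = real N * real s" .
  have Mdef: "M n p q F = Num / Den" unfolding M_def Num_def Den_def P_def by simp
  have m2: "(m x)\<^sup>2 \<le> A x * B x" if "x \<in> P" for x
  proof (cases "G x p q")
    case True
    then have "B x \<le> A x" "0 \<le> B x" unfolding A_def B_def using G_le1 by auto
    then show ?thesis using True unfolding m_def by (simp add: power2_eq_square mult_right_mono)
  next
    case False
    then have "A x \<le> B x" "0 \<le> A x" unfolding A_def B_def using G_le2 pq by auto
    then show ?thesis using False unfolding m_def by (simp add: power2_eq_square mult_left_mono)
  qed
  have "(real s * (E1 + E2))\<^sup>2 \<le> real N * (\<Sum>x\<in>P. (m x)\<^sup>2)"
    unfolding sE N_def by (rule CS_sum[OF finP])
  also have "\<dots> \<le> real N * (\<Sum>x\<in>P. A x * B x)"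
    by (rule mult_left_mono) (auto intro!: sum_mono m2)
  also have "\<dots> = real N * (real s * Num)" using sNum by simp
  finally have key: "(real s)\<^sup>2 * (E1 + E2)\<^sup>2 \<le> real N * real s * Num" by (simp add: power_mult_distrib mult.assoc)
  have E0: "0 \<le> E1 + E2" unfolding E1_def E2_def by simp
  have goal: "((E1 + E2) / real N)\<^sup>2 \<le> M n p q F"
  proof -
    have "((E1 + E2) / real N)\<^sup>2 = (real s)\<^sup>2 * (E1 + E2)\<^sup>2 / ((real s)\<^sup>2 * (real N)\<^sup>2)"
      using spos Npos by (simp add: power_divide)
    also have "\<dots> \<le> real N * real s * Num / ((real s)\<^sup>2 * (real N)\<^sup>2)"
      by (rule divide_right_mono[OF key]) simp
    also have "\<dots> = Num / (real N * real s)"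
      using spos Npos by (simp add: power2_eq_square field_simps)
    finally show ?thesis using Mdef den by simp
  qed
  have "Pr n (\<lambda>x. F x = p \<and> \<not> G x p q) + Pr n (\<lambda>x. F x = q \<and> \<not> G x q p) = (E1 + E2) / real N"
    unfolding Pr_def E1_def E2_def N_def P_def by (simp add: add_divide_distrib)
  also have "\<dots> \<le> sqrt (M n p q F)" by (rule real_le_rsqrt[OF goal])
  finally show ?thesis .
qed

end



locale trl = three a b c for a b c :: "'a::finite" +
  fixes n :: nat and H :: "(nat \<Rightarrow> ('a \<times> 'a) set) \<Rightarrow> 'a \<Rightarrow> 'a \<Rightarrow> bool"
  assumes HTR: "H \<in> TR n"
begin

lemma H_gswf: "x \<in> profiles n \<Longrightarrow> p \<noteq> q \<Longrightarrow> H x q p \<longleftrightarrow> \<not> H x p q"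
  using HTR unfolding TR_def is_gswf_def by blast

lemma H_IIA: "x \<in> profiles n \<Longrightarrow> x' \<in> profiles n \<Longrightarrow> agree_on n p q x x' \<Longrightarrow> H x p q = H x' p q"
  using HTR unfolding TR_def IIA_def by blast

lemma H_trans: "x \<in> profiles n \<Longrightarrow> H x p q \<Longrightarrow> H x q r \<Longrightarrow> H x p r"
  using HTR unfolding TR_def transitive_out_def by blast

definition mk :: "(nat \<Rightarrow> bool) \<Rightarrow> (nat \<Rightarrow> bool) \<Rightarrow> (nat \<Rightarrow> bool) \<Rightarrow> nat \<Rightarrow> ('a \<times> 'a) set" where
  "mk U V W = (\<lambda>i. if i < n then ord3 (U i) (V i) (W i) else undefined)"

definition nae :: "(nat \<Rightarrow> bool) \<Rightarrow> (nat \<Rightarrow> bool) \<Rightarrow> (nat \<Rightarrow> bool) \<Rightarrow> bool" where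
  "nae U V W \<longleftrightarrow> (\<forall>i<n. \<not> (U i = V i \<and> V i = W i))"

definition neg :: "(nat \<Rightarrow> bool) \<Rightarrow> nat \<Rightarrow> bool" where "neg U = (\<lambda>i. \<not> U i)"

lemma neg_neg[simp]: "neg (neg U) = U" unfolding neg_def by simp

lemma mk_prof: "nae U V W \<Longrightarrow> mk U V W \<in> profiles n"
  unfolding profiles_iff mk_def nae_def using ord3_lin by auto

lemma mk_bits:
  assumes "nae U V W" "i < n"
  shows "(a,b) \<in> mk U V W i \<longleftrightarrow> U i" "(b,c) \<in> mk U V W i \<longleftrightarrow> V i" "(c,a) \<in> mk U V W i \<longleftrightarrow> W i"
  using assms ord3_bits[of "U i" "V i" "W i"] unfolding mk_def nae_def by auto

definition f where "f U = H (mk U (neg U) U) a b"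
definition g where "g V = H (mk V V (neg V)) b c"
definition k where "k W = H (mk (neg W) W W) c a"

lemma nae1: "nae U (neg U) W" unfolding nae_def neg_def by auto
lemma nae2: "nae U V (neg V)" unfolding nae_def neg_def by auto
lemma nae3: "nae (neg W) V W" unfolding nae_def neg_def by auto

lemma key:
  assumes N: "nae U V W"
  shows "\<not> (f U = g V \<and> g V = k W)"
proof
  assume e: "f U = g V \<and> g V = k W"
  define w where "w = mk U V W"
  have wP: "w \<in> profiles n" unfolding w_def by (rule mk_prof[OF N])
  have "H w a b = f U" unfolding f_def
    by (rule H_IIA[OF wP mk_prof[OF nae1]]) (simp add: agree_on_def w_def mk_bits[OF N] mk_bits[OF nae1])
  moreover have "H w b c = g V" unfolding g_def
    by (rule H_IIA[OF wP mk_prof[OF nae2]]) (simp add: agree_on_def w_def mk_bits[OF N] mk_bits[OF nae2])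
  moreover have "H w c a = k W" unfolding k_def
    by (rule H_IIA[OF wP mk_prof[OF nae3]]) (simp add: agree_on_def w_def mk_bits[OF N] mk_bits[OF nae3])
  ultimately have e2: "H w a b = H w b c \<and> H w b c = H w c a" using e by simp
  show False
  proof (cases "H w a b")
    case True
    then have "H w b c" "H w c a" using e2 by auto
    then have "H w a c" using H_trans[OF wP True \<open>H w b c\<close>] by blast
    then show False using H_gswf[OF wP ac] \<open>H w c a\<close> by simp
  next
    case False
    then have "\<not> H w b c" "\<not> H w c a" using e2 by auto
    then have 1: "H w b a" and 2: "H w c b" and 3: "H w a c"
      using H_gswf[OF wP ab] H_gswf[OF wP bc] H_gswf[OF wP ac] False by auto
    have "H w c a" by (rule H_trans[OF wP 2 1])
    then show False using \<open>\<not> H w c a\<close> by simp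
  qed
qed

definition bab :: "(nat \<Rightarrow> ('a \<times> 'a) set) \<Rightarrow> nat \<Rightarrow> bool" where "bab x = (\<lambda>i. (a,b) \<in> x i)"
definition bbc :: "(nat \<Rightarrow> ('a \<times> 'a) set) \<Rightarrow> nat \<Rightarrow> bool" where "bbc x = (\<lambda>i. (b,c) \<in> x i)"
definition bca :: "(nat \<Rightarrow> ('a \<times> 'a) set) \<Rightarrow> nat \<Rightarrow> bool" where "bca x = (\<lambda>i. (c,a) \<in> x i)"

lemma H_f: "x \<in> profiles n \<Longrightarrow> H x a b = f (bab x)"
  unfolding f_def by (rule H_IIA[OF _ mk_prof[OF nae1]]) (simp_all add: agree_on_def bab_def mk_bits[OF nae1])
lemma H_g: "x \<in> profiles n \<Longrightarrow> H x b c = g (bbc x)"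
  unfolding g_def by (rule H_IIA[OF _ mk_prof[OF nae2]]) (simp_all add: agree_on_def bbc_def mk_bits[OF nae2])
lemma H_k: "x \<in> profiles n \<Longrightarrow> H x c a = k (bca x)"
  unfolding k_def by (rule H_IIA[OF _ mk_prof[OF nae3]]) (simp_all add: agree_on_def bca_def mk_bits[OF nae3])

lemma mk_local: "(\<And>i. i < n \<Longrightarrow> U i = U' i) \<Longrightarrow> (\<And>i. i < n \<Longrightarrow> V i = V' i) \<Longrightarrow> (\<And>i. i < n \<Longrightarrow> W i = W' i)
  \<Longrightarrow> mk U V W = mk U' V' W'"
  unfolding mk_def by (rule ext) auto

lemma f_local: "(\<And>i. i < n \<Longrightarrow> U i = U' i) \<Longrightarrow> f U = f U'"
  unfolding f_def by (rule arg_cong[where f="\<lambda>z. H z a b"], rule mk_local) (auto simp: neg_def)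


lemma exists_val: assumes "\<exists>U1 U0. h U1 \<and> \<not> h U0" shows "\<exists>W. h W = t"
  using assms by (cases t) auto

lemma dual:
  assumes fnc: "\<exists>U1 U0. f U1 \<and> \<not> f U0" and gnc: "\<exists>U1 U0. g U1 \<and> \<not> g U0"
    and knc: "\<exists>U1 U0. k U1 \<and> \<not> k U0"
  shows "g U = f U" "k U = f U" "f (neg U) = (\<not> f U)"
proof -
  have s1: "g (neg U) = (\<not> f U)" for U
  proof -
    obtain W where W: "k W = f U" using exists_val[OF knc] by blast
    show ?thesis using key[OF nae1[of U W]] W by auto
  qed
  have s2: "k (neg V) = (\<not> g V)" for V
  proof -
    obtain U where U: "f U = g V" using exists_val[OF fnc] by blast
    show ?thesis using key[OF nae2[of U V]] U by auto
  qed
  have s3: "f (neg W) = (\<not> k W)" for W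
  proof -
    obtain V where V: "g V = k W" using exists_val[OF gnc] by blast
    show ?thesis using key[OF nae3[of W V]] V by auto
  qed
  have kf: "k W = f W" for W using s2[of "neg W"] s1[of W] by simp
  show "k U = f U" by (rule kf)
  show fn: "f (neg U) = (\<not> f U)" using s3[of U] kf[of U] by simp
  show "g U = f U" using s1[of "neg U"] s3[of U] kf[of U] by simp
qed

lemma closure:
  assumes du: "\<And>U. g U = f U" "\<And>U. k U = f U" "\<And>U. f (neg U) = (\<not> f U)"
    and fU: "f U" and fV: "f V" and W: "\<And>i. i < n \<Longrightarrow> U i = V i \<Longrightarrow> W i = U i"
  shows "f W"
proof (rule ccontr)
  assume nW: "\<not> f W"
  have N: "nae U V (neg W)" unfolding nae_def neg_def using W by auto
  have "f U = g V \<and> g V = k (neg W)" using du fU fV nW by simp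
  then show False using key[OF N] by blast
qed

lemma reduce:
  assumes du: "\<And>U. g U = f U" "\<And>U. k U = f U" "\<And>U. f (neg U) = (\<not> f U)"
  shows "\<forall>U V. card {i. i < n \<and> U i = V i} = m \<longrightarrow> f U \<longrightarrow> f V \<longrightarrow>
           (\<exists>U' V' j. j < n \<and> f U' \<and> f V' \<and> {i. i < n \<and> U' i = V' i} = {j})"
proof (induction m rule: less_induct)
  case (less m)
  show ?case
  proof (intro allI impI)
    fix U V assume cm: "card {i. i < n \<and> U i = V i} = m" and fU: "f U" and fV: "f V"
    define D where "D = {i. i < n \<and> U i = V i}"
    have finD: "finite D" unfolding D_def by auto
    have Dne: "D \<noteq> {}"
    proof
      assume "D = {}"
      then have "\<And>i. i < n \<Longrightarrow> V i = neg U i" unfolding D_def neg_def by auto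
      then have "f V = f (neg U)" by (rule f_local)
      then show False using du(3) fU fV by simp
    qed
    then obtain j where j: "j \<in> D" by blast
    then have jn: "j < n" and jUV: "U j = V j" unfolding D_def by auto
    show "\<exists>U' V' j. j < n \<and> f U' \<and> f V' \<and> {i. i < n \<and> U' i = V' i} = {j}"
    proof (cases "D = {j}")
      case True
      then show ?thesis using jn fU fV unfolding D_def by blast
    next
      case False
      define D' where "D' = D - {j}"
      define W0 where "W0 = (\<lambda>i. if i \<in> D' then U i else \<not> U i)"
      show ?thesis
      proof (cases "f W0")
        case True
        have eq: "{i. i < n \<and> U i = W0 i} = D'" unfolding W0_def D'_def D_def by auto
        have "card D' < card D" unfolding D'_def by (rule card_Diff1_less[OF finD j])
        then have "card {i. i < n \<and> U i = W0 i} < m" using eq cm unfolding D_def by simp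
        then show ?thesis using less.IH fU True by blast
      next
        case False
        then have fn: "f (neg W0)" using du(3) by simp
        have "{i. i < n \<and> V i = neg W0 i} = {j}"
          unfolding W0_def D'_def neg_def using j jUV unfolding D_def by auto
        then show ?thesis using fV fn jn by blast
      qed
    qed
  qed
qed

lemma pairs:
  assumes x: "x \<in> profiles n" and R: "linear_order R"
    and h1: "H x a b = ((a,b) \<in> R)" and h2: "H x b c = ((b,c) \<in> R)" and h3: "H x c a = ((c,a) \<in> R)"
    and pq: "p \<noteq> q"
  shows "H x p q = ((p,q) \<in> R)"
proof -
  have "p = a \<or> p = b \<or> p = c" "q = a \<or> q = b \<or> q = c" using univ by auto
  then show ?thesis using pq h1 h2 h3 H_gswf[OF x ab] H_gswf[OF x bc] H_gswf[OF x ac]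
      lin_swap[OF R ab] lin_swap[OF R bc] lin_swap[OF R ac]
    by (elim disjE) simp_all
qed

lemma classify:
  "(\<exists>a'. \<forall>x\<in>profiles n. \<exists>q. q \<noteq> a' \<and> \<not> H x a' q)
   \<or> (\<exists>j<n. \<forall>x\<in>profiles n. \<forall>q. q \<noteq> top_alt (x j) \<longrightarrow> H x (top_alt (x j)) q)
   \<or> (\<exists>j<n. \<forall>x\<in>profiles n. \<forall>q. q \<noteq> bottom_alt (x j) \<longrightarrow> H x (bottom_alt (x j)) q)"
proof (cases "(\<exists>U1 U0. f U1 \<and> \<not> f U0) \<and> (\<exists>U1 U0. g U1 \<and> \<not> g U0) \<and> (\<exists>U1 U0. k U1 \<and> \<not> k U0)")
  case False
  have ba: "\<not> H x b a" if "x \<in> profiles n" "H x a b" for x using H_gswf[OF that(1) ab] that(2) by simp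
  have cb: "\<not> H x c b" if "x \<in> profiles n" "H x b c" for x using H_gswf[OF that(1) bc] that(2) by simp
  have ac': "\<not> H x a c" if "x \<in> profiles n" "H x c a" for x using H_gswf[OF that(1) ac] that(2) by simp
  from False have "(\<forall>U. f U) \<or> (\<forall>U. \<not> f U) \<or> (\<forall>U. g U) \<or> (\<forall>U. \<not> g U) \<or> (\<forall>U. k U) \<or> (\<forall>U. \<not> k U)"
    by blast
  then have "\<exists>a'. \<forall>x\<in>profiles n. \<exists>q. q \<noteq> a' \<and> \<not> H x a' q"
  proof (elim disjE)
    assume h: "\<forall>U. f U"
    show ?thesis
    proof (rule exI[of _ b], intro ballI)
      fix x :: "nat \<Rightarrow> ('a \<times> 'a) set" assume x: "x \<in> profiles n"
      have "\<not> H x b a" using H_gswf[OF x ab] H_f[OF x] h by simp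
      then show "\<exists>q. q \<noteq> b \<and> \<not> H x b q" using ab by (intro exI[of _ a]) auto
    qed
  next
    assume h: "\<forall>U. \<not> f U"
    show ?thesis
    proof (rule exI[of _ a], intro ballI)
      fix x :: "nat \<Rightarrow> ('a \<times> 'a) set" assume x: "x \<in> profiles n"
      have "\<not> H x a b" using H_f[OF x] h by simp
      then show "\<exists>q. q \<noteq> a \<and> \<not> H x a q" using ab by (intro exI[of _ b]) auto
    qed
  next
    assume h: "\<forall>U. g U"
    show ?thesis
    proof (rule exI[of _ c], intro ballI)
      fix x :: "nat \<Rightarrow> ('a \<times> 'a) set" assume x: "x \<in> profiles n"
      have "\<not> H x c b" using H_gswf[OF x bc] H_g[OF x] h by simp
      then show "\<exists>q. q \<noteq> c \<and> \<not> H x c q" using bc by (intro exI[of _ b]) auto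
    qed
  next
    assume h: "\<forall>U. \<not> g U"
    show ?thesis
    proof (rule exI[of _ b], intro ballI)
      fix x :: "nat \<Rightarrow> ('a \<times> 'a) set" assume x: "x \<in> profiles n"
      have "\<not> H x b c" using H_g[OF x] h by simp
      then show "\<exists>q. q \<noteq> b \<and> \<not> H x b q" using bc by (intro exI[of _ c]) auto
    qed
  next
    assume h: "\<forall>U. k U"
    show ?thesis
    proof (rule exI[of _ a], intro ballI)
      fix x :: "nat \<Rightarrow> ('a \<times> 'a) set" assume x: "x \<in> profiles n"
      have "\<not> H x a c" using H_gswf[OF x ac] H_k[OF x] h by simp
      then show "\<exists>q. q \<noteq> a \<and> \<not> H x a q" using ac by (intro exI[of _ c]) auto
    qed
  next
    assume h: "\<forall>U. \<not> k U"
    show ?thesis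
    proof (rule exI[of _ c], intro ballI)
      fix x :: "nat \<Rightarrow> ('a \<times> 'a) set" assume x: "x \<in> profiles n"
      have "\<not> H x c a" using H_k[OF x] h by simp
      then show "\<exists>q. q \<noteq> c \<and> \<not> H x c q" using ac by (intro exI[of _ a]) auto
    qed
  qed
  then show ?thesis by blast
next
  case True
  then have fnc: "\<exists>U1 U0. f U1 \<and> \<not> f U0" and gnc: "\<exists>U1 U0. g U1 \<and> \<not> g U0"
    and knc: "\<exists>U1 U0. k U1 \<and> \<not> k U0" by auto
  note du = dual[OF fnc gnc knc]
  obtain U1 where fU1: "f U1" using fnc by blast
  obtain U' V' j where j: "j < n" and fU': "f U'" and fV': "f V'" and D: "{i. i < n \<and> U' i = V' i} = {j}"
    using reduce[OF du, of "card {i. i < n \<and> U1 i = U1 i}"] fU1 by blast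
  define c0 where "c0 = U' j"
  have pos: "f W" if "W j = c0" for W
  proof (rule closure[OF du fU' fV'])
    fix i assume "i < n" "U' i = V' i"
    then have "i = j" using D by blast
    then show "W i = U' i" using that c0_def by simp
  qed
  have fW: "f W = (W j = c0)" for W
  proof (cases "W j = c0")
    case True then show ?thesis using pos by simp
  next
    case False
    then have "neg W j = c0" unfolding neg_def by auto
    then have "f (neg W)" by (rule pos)
    then show ?thesis using du(3)[of W] False by simp
  qed
  have fx: "H x a b = ((a,b) \<in> x j = c0)" "H x b c = ((b,c) \<in> x j = c0)" "H x c a = ((c,a) \<in> x j = c0)"
    if "x \<in> profiles n" for x
    using H_f[OF that] H_g[OF that] H_k[OF that] du(1) du(2) fW unfolding bab_def bbc_def bca_def by simp_all
  show ?thesis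
  proof (cases c0)
    case True
    have "\<forall>x\<in>profiles n. \<forall>q. q \<noteq> top_alt (x j) \<longrightarrow> H x (top_alt (x j)) q"
    proof (intro ballI allI impI)
      fix x :: "nat \<Rightarrow> ('a \<times> 'a) set" and q assume x: "x \<in> profiles n" and q: "q \<noteq> top_alt (x j)"
      have L: "linear_order (x j)" using x j profiles_iff by blast
      have "H x (top_alt (x j)) q = ((top_alt (x j), q) \<in> x j)"
        by (rule pairs[OF x L]) (use fx[OF x] True q in auto)
      then show "H x (top_alt (x j)) q" using top_alt[OF L] by simp
    qed
    then show ?thesis using j by blast
  next
    case False
    have "\<forall>x\<in>profiles n. \<forall>q. q \<noteq> bottom_alt (x j) \<longrightarrow> H x (bottom_alt (x j)) q"
    proof (intro ballI allI impI)
      fix x :: "nat \<Rightarrow> ('a \<times> 'a) set" and q assume x: "x \<in> profiles n" and q: "q \<noteq> bottom_alt (x j)"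
      have L: "linear_order (x j)" using x j profiles_iff by blast
      have L': "linear_order ((x j)\<inverse>)" using converse_lin[OF L] .
      have s1: "(b,a) \<in> x j \<longleftrightarrow> (a,b) \<notin> x j" using lin_swap[OF L ab] .
      have s2: "(c,b) \<in> x j \<longleftrightarrow> (b,c) \<notin> x j" using lin_swap[OF L bc] .
      have s3: "(a,c) \<in> x j \<longleftrightarrow> (c,a) \<notin> x j" using lin_swap[OF L ac[symmetric]] .
      have "H x (bottom_alt (x j)) q = ((bottom_alt (x j), q) \<in> (x j)\<inverse>)"
        by (rule pairs[OF x L']) (use fx[OF x] False q s1 s2 s3 in auto)
      then show "H x (bottom_alt (x j)) q" using bottom_alt[OF L] by simp
    qed
    then show ?thesis using j by blast
  qed
qed

end



context scf begin

lemma G_irrefl: "\<not> G x p p" unfolding G_def by simp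

lemma top_trans:
  assumes x: "x \<in> profiles n" and t: "\<And>q. q \<noteq> t \<Longrightarrow> G x t q"
  shows "transitive_out (G x)"
  unfolding transitive_out_def
proof (intro allI impI)
  fix u v w assume h: "G x u v \<and> G x v w"
  then have uv: "u \<noteq> v" and vw: "v \<noteq> w" using G_irrefl by auto
  show "G x u w"
  proof (cases "u = w")
    case True
    then show ?thesis using h G_anti[OF x uv] by simp
  next
    case False
    have "t = a \<or> t = b \<or> t = c" "u = a \<or> u = b \<or> u = c" "v = a \<or> v = b \<or> v = c" "w = a \<or> w = b \<or> w = c"
      using univ by auto
    then have "t = u \<or> t = v \<or> t = w"
      using uv vw False ab bc ac by (elim disjE) simp_all
    then show ?thesis
    proof (elim disjE)
      assume "t = u" then show ?thesis using t False by simp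
    next
      assume tv: "t = v"
      then have "G x v u" using t uv by simp
      then show ?thesis using h G_anti[OF x uv] by simp
    next
      assume tw: "t = w"
      then have "G x w v" using t vw by simp
      then show ?thesis using h G_anti[OF x vw] by simp
    qed
  qed
qed

definition bad where "bad x \<longleftrightarrow> (\<exists>q. q \<noteq> F x \<and> \<not> G x (F x) q)"

definition Ev where "Ev p q x \<longleftrightarrow> F x = p \<and> \<not> G x p q"

lemma bad_cases: "bad x \<Longrightarrow> (Ev a b x \<or> Ev b a x) \<or> (Ev a c x \<or> Ev c a x) \<or> (Ev b c x \<or> Ev c b x)"
proof -
  assume "bad x"
  then obtain q where q: "q \<noteq> F x" "\<not> G x (F x) q" unfolding bad_def by blast
  have "F x = a \<or> F x = b \<or> F x = c" "q = a \<or> q = b \<or> q = c" using univ by auto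
  then show ?thesis using q unfolding Ev_def by (elim disjE) simp_all
qed

lemma Pr_bad:
  assumes i: "\<forall>p q. p \<noteq> q \<longrightarrow> M n p q F \<le> e"
  shows "Pr n bad \<le> 3 * sqrt e"
proof -
  have pair: "Pr n (\<lambda>x. Ev p q x \<or> Ev q p x) \<le> sqrt e" if "p \<noteq> q" for p q
  proof -
    have "Pr n (\<lambda>x. Ev p q x \<or> Ev q p x) \<le> Pr n (Ev p q) + Pr n (Ev q p)" by (rule Pr_union)
    also have "\<dots> \<le> sqrt (M n p q F)" using est[OF that] unfolding Ev_def by simp
    also have "\<dots> \<le> sqrt e" using i that by simp
    finally show ?thesis .
  qed
  have "Pr n bad \<le> Pr n (\<lambda>x. (Ev a b x \<or> Ev b a x) \<or> (Ev a c x \<or> Ev c a x) \<or> (Ev b c x \<or> Ev c b x))"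
    by (rule Pr_mono) (rule bad_cases)
  also have "\<dots> \<le> Pr n (\<lambda>x. Ev a b x \<or> Ev b a x) + Pr n (\<lambda>x. (Ev a c x \<or> Ev c a x) \<or> (Ev b c x \<or> Ev c b x))"
    by (rule Pr_union)
  also have "\<dots> \<le> Pr n (\<lambda>x. Ev a b x \<or> Ev b a x) + (Pr n (\<lambda>x. Ev a c x \<or> Ev c a x) + Pr n (\<lambda>x. Ev b c x \<or> Ev c b x))"
    using Pr_union[of n "\<lambda>x. Ev a c x \<or> Ev c a x" "\<lambda>x. Ev b c x \<or> Ev c b x"] by simp
  also have "\<dots> \<le> sqrt e + (sqrt e + sqrt e)"
    using pair[OF ab] pair[OF ac] pair[OF bc] by linarith
  finally show ?thesis by simp
qed

lemma NT_G: "NT n G \<le> Pr n bad"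
  unfolding NT_def
proof (rule Pr_mono)
  fix x assume x: "x \<in> profiles n" and nt: "\<not> transitive_out (G x)"
  show "bad x"
  proof (rule ccontr)
    assume "\<not> bad x"
    then have "\<And>q. q \<noteq> F x \<Longrightarrow> G x (F x) q" unfolding bad_def by blast
    then show False using top_trans[OF x] nt by blast
  qed
qed

definition H0 :: "(nat \<Rightarrow> ('a \<times> 'a) set) \<Rightarrow> 'a \<Rightarrow> 'a \<Rightarrow> bool" where
  "H0 x p q = (rk p < rk q)"

lemma H0_TR: "H0 \<in> TR n"
proof -
  have "is_gswf n H0" unfolding is_gswf_def H0_def using rk_inj by (auto simp: not_less order.order_iff_strict)
  moreover have "IIA n H0" unfolding IIA_def H0_def by simp
  moreover have "\<forall>x\<in>profiles n. transitive_out (H0 x)" unfolding transitive_out_def H0_def by auto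
  ultimately show ?thesis unfolding TR_def by blast
qed

lemma nottop_le:
  assumes HT: "H \<in> TR n"
  shows "Pr n (\<lambda>x. \<not> (\<forall>q. q \<noteq> F x \<longrightarrow> H x (F x) q)) \<le> Pr n (\<lambda>x. G x \<noteq> H x) + Pr n bad"
proof -
  have "Pr n (\<lambda>x. \<not> (\<forall>q. q \<noteq> F x \<longrightarrow> H x (F x) q)) \<le> Pr n (\<lambda>x. G x \<noteq> H x \<or> bad x)"
  proof (rule Pr_mono)
    fix x assume "\<not> (\<forall>q. q \<noteq> F x \<longrightarrow> H x (F x) q)"
    then show "G x \<noteq> H x \<or> bad x" unfolding bad_def by auto
  qed
  also have "\<dots> \<le> Pr n (\<lambda>x. G x \<noteq> H x) + Pr n bad" by (rule Pr_union)
  finally show ?thesis .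
qed

lemma nottop_ge:
  assumes HT: "H \<in> TR n" and e2: "\<epsilon>2 > 0"
    and ii: "\<forall>i<n. far_from_dict n \<epsilon>2 F i \<and> far_from_antidict n \<epsilon>2 F i"
    and iii: "\<forall>a. Pr n (\<lambda>x. F x = a) \<ge> \<epsilon>2"
  shows "\<epsilon>2 \<le> Pr n (\<lambda>x. \<not> (\<forall>q. q \<noteq> F x \<longrightarrow> H x (F x) q))"
proof -
  interpret T: trl a b c n H by unfold_locales (rule HT)
  from T.classify show ?thesis
  proof (elim disjE exE conjE)
    fix a' assume h: "\<forall>x\<in>profiles n. \<exists>q. q \<noteq> a' \<and> \<not> H x a' q"
    have "Pr n (\<lambda>x. F x = a') \<le> Pr n (\<lambda>x. \<not> (\<forall>q. q \<noteq> F x \<longrightarrow> H x (F x) q))"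
      by (rule Pr_mono) (use h in auto)
    then show ?thesis using iii by (meson order_trans)
  next
    fix j assume j: "j < n" and h: "\<forall>x\<in>profiles n. \<forall>q. q \<noteq> top_alt (x j) \<longrightarrow> H x (top_alt (x j)) q"
    have "Pr n (\<lambda>x. F x \<noteq> top_alt (x j)) \<le> Pr n (\<lambda>x. \<not> (\<forall>q. q \<noteq> F x \<longrightarrow> H x (F x) q))"
    proof (rule Pr_mono)
      fix x assume x: "x \<in> profiles n" and ne: "F x \<noteq> top_alt (x j)"
      have "H x (top_alt (x j)) (F x)" using h x ne by auto
      then have nh: "\<not> H x (F x) (top_alt (x j))" using T.H_gswf[OF x ne] by simp
      have ne': "top_alt (x j) \<noteq> F x" using ne by simp
      show "\<not> (\<forall>q. q \<noteq> F x \<longrightarrow> H x (F x) q)"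
      proof
        assume "\<forall>q. q \<noteq> F x \<longrightarrow> H x (F x) q"
        then have "H x (F x) (top_alt (x j))" using ne' by blast
        then show False using nh by simp
      qed
    qed
    moreover have "\<epsilon>2 \<le> Pr n (\<lambda>x. F x \<noteq> top_alt (x j))" using ii j unfolding far_from_dict_def by blast
    ultimately show ?thesis by linarith
  next
    fix j assume j: "j < n" and h: "\<forall>x\<in>profiles n. \<forall>q. q \<noteq> bottom_alt (x j) \<longrightarrow> H x (bottom_alt (x j)) q"
    have "Pr n (\<lambda>x. F x \<noteq> bottom_alt (x j)) \<le> Pr n (\<lambda>x. \<not> (\<forall>q. q \<noteq> F x \<longrightarrow> H x (F x) q))"
    proof (rule Pr_mono)
      fix x assume x: "x \<in> profiles n" and ne: "F x \<noteq> bottom_alt (x j)"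
      have "H x (bottom_alt (x j)) (F x)" using h x ne by auto
      then have nh: "\<not> H x (F x) (bottom_alt (x j))" using T.H_gswf[OF x ne] by simp
      have ne': "bottom_alt (x j) \<noteq> F x" using ne by simp
      show "\<not> (\<forall>q. q \<noteq> F x \<longrightarrow> H x (F x) q)"
      proof
        assume "\<forall>q. q \<noteq> F x \<longrightarrow> H x (F x) q"
        then have "H x (F x) (bottom_alt (x j))" using ne' by blast
        then show False using nh by simp
      qed
    qed
    moreover have "\<epsilon>2 \<le> Pr n (\<lambda>x. F x \<noteq> bottom_alt (x j))" using ii j unfolding far_from_antidict_def by blast
    ultimately show ?thesis by linarith
  qed
qed

lemma main:
  assumes e1: "\<epsilon>1 > 0" and e2: "\<epsilon>2 > 0"
    and i: "\<forall>a b. a \<noteq> b \<longrightarrow> M n a b F \<le> \<epsilon>1"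
    and ii: "\<forall>i<n. far_from_dict n \<epsilon>2 F i \<and> far_from_antidict n \<epsilon>2 F i"
    and iii: "\<forall>a. Pr n (\<lambda>x. F x = a) \<ge> \<epsilon>2"
  shows "is_gswf n G \<and> IIA n G \<and> Dist n G \<ge> \<epsilon>2 - 3 * sqrt \<epsilon>1 \<and> NT n G \<le> 3 * sqrt \<epsilon>1"
proof -
  have pb: "Pr n bad \<le> 3 * sqrt \<epsilon>1" by (rule Pr_bad[OF i])
  have "Dist n G \<ge> \<epsilon>2 - 3 * sqrt \<epsilon>1"
    unfolding Dist_def
  proof (rule cInf_greatest)
    show "(\<lambda>H. Pr n (\<lambda>x. G x \<noteq> H x)) ` TR n \<noteq> {}" using H0_TR by blast
  next
    fix r assume "r \<in> (\<lambda>H. Pr n (\<lambda>x. G x \<noteq> H x)) ` TR n"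
    then obtain H where HT: "H \<in> TR n" and r: "r = Pr n (\<lambda>x. G x \<noteq> H x)" by blast
    show "\<epsilon>2 - 3 * sqrt \<epsilon>1 \<le> r"
      using nottop_le[OF HT] nottop_ge[OF HT e2 ii iii] pb r by linarith
  qed
  moreover have "NT n G \<le> 3 * sqrt \<epsilon>1" using NT_G pb by linarith
  ultimately show ?thesis using G_gswf G_IIA by blast
qed

end

theorem lemma4p3:
  fixes n :: nat and F :: "(nat \<Rightarrow> ('a::finite \<times> 'a) set) \<Rightarrow> 'a"
    and \<epsilon>1 \<epsilon>2 :: real
  assumes three: "card (UNIV :: 'a set) = 3"
    and e1: "\<epsilon>1 > 0" and e2: "\<epsilon>2 > 0"
    and i: "\<forall>a b. a \<noteq> b \<longrightarrow> M n a b F \<le> \<epsilon>1"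
    and ii: "\<forall>i<n. far_from_dict n \<epsilon>2 F i \<and> far_from_antidict n \<epsilon>2 F i"
    and iii: "\<forall>a. Pr n (\<lambda>x. F x = a) \<ge> \<epsilon>2"
  shows "\<exists>G :: (nat \<Rightarrow> ('a \<times> 'a) set) \<Rightarrow> 'a \<Rightarrow> 'a \<Rightarrow> bool. is_gswf n G \<and> IIA n G \<and> Dist n G \<ge> \<epsilon>2 - 3 * sqrt \<epsilon>1
             \<and> NT n G \<le> 3 * sqrt \<epsilon>1"
proof -
  obtain a b c :: 'a where U: "UNIV = {a, b, c}" and ab: "a \<noteq> b" and bc: "b \<noteq> c" and ac: "a \<noteq> c"
    using three card_3_iff by metis
  interpret S: scf a b c n F
    by unfold_locales (use ab bc ac U in auto)
  show ?thesis using S.main[OF e1 e2 i ii iii] by blast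
qed


end
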